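(* Let $d\ge1$ and $t\ge1$ be integers, $M\ge1$ a real constant, and $f:[0,1]^d\to\mathbb{R}$ any function. Let $\hat f$ be the neural network produced by the construction described in the context. Then for every $\mathbf{p}\in P=\{(i_1,\dots,i_d)/t: i_r\in\mathbb{Z},\ 0\le i_r\le t\}$, $|f(\mathbf{p})-\hat f(\mathbf{p})|=0$.
   Context: Let $\sigma(z)=\max(z,0)$ and $k=(t+1)^d$. For an integer $0\le i\le k-1$ let $\boldsymbol\pi^i=(\pi^i_1,\dots,\pi^i_d)$ be its base-$(t+1)$ digit vector, i.e. $0\le\pi^i_r\le t$ and $i=\sum_{r=1}^d\pi^i_r(t+1)^{d-r}$; then $\{\boldsymbol\pi^i/t\}_{i=0}^{k-1}=P$. For parameters $a_j,b_{1,j},\dots,b_{d,j}$ define the g-unit $\hat g_j(\mathbf{x})=a_j\,\sigma\big(\sum_{r=1}^d -M\sigma(-x_r+b_{r,j})+\tfrac1t\big)$. Construction: set $b=f(\mathbf{0})$; for $i=1,2,\dots,k-1$ in order: let $\hat y=b+\sum_{j=1}^{i-1}\hat g_j(\boldsymbol\pi^i/t)$ (computed with the already fixed parameters), set $b_{r,i}=\pi^i_r/t$ for $r=1,\dots,d$, and set $a_i=t\big(f(\boldsymbol\pi^i/t)-\hat y\big)$. The output is $\hat f(\mathbf{x})=b+\sum_{i=1}^{k-1}\hat g_i(\mathbf{x})$. *)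

theory Defs
  imports Complex_Main
begin

text \<open>Points of [0,1]^d are represented as functions nat \<Rightarrow> real, with coordinates
  indexed by r \<in> {1..d} and all other coordinates equal to 0.\<close>

definition relu :: "real \<Rightarrow> real" where
  "relu z = max z 0"

definition digit :: "nat \<Rightarrow> nat \<Rightarrow> nat \<Rightarrow> nat \<Rightarrow> nat" where
  "digit t d i r = (i div (t+1)^(d-r)) mod (t+1)"

definition gridpt :: "nat \<Rightarrow> nat \<Rightarrow> nat \<Rightarrow> (nat \<Rightarrow> real)" where
  "gridpt t d i = (\<lambda>r. if 1 \<le> r \<and> r \<le> d then real (digit t d i r) / real t else 0)"

definition gridP :: "nat \<Rightarrow> nat \<Rightarrow> (nat \<Rightarrow> real) set" where
  "gridP t d = {p. (\<forall>r\<in>{1..d}. \<exists>i::nat. i \<le> t \<and> p r = real i / real t)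
                 \<and> (\<forall>r. r \<notin> {1..d} \<longrightarrow> p r = 0)}"

definition gunit :: "real \<Rightarrow> nat \<Rightarrow> nat \<Rightarrow> real \<Rightarrow> (nat \<Rightarrow> real) \<Rightarrow> (nat \<Rightarrow> real) \<Rightarrow> real" where
  "gunit M t d a b x = a * relu ((\<Sum>r=1..d. - M * relu (- x r + b r)) + 1 / real t)"

definition partial_net ::
  "((nat \<Rightarrow> real) \<Rightarrow> real) \<Rightarrow> real \<Rightarrow> nat \<Rightarrow> nat \<Rightarrow> (nat \<Rightarrow> real) \<Rightarrow> nat \<Rightarrow> (nat \<Rightarrow> real) \<Rightarrow> real" where
  "partial_net f M t d a i x =
     f (\<lambda>_. 0) + (\<Sum>j\<in>{1..<i}. gunit M t d (a j) (gridpt t d j) x)"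

primrec coeffs :: "((nat \<Rightarrow> real) \<Rightarrow> real) \<Rightarrow> real \<Rightarrow> nat \<Rightarrow> nat \<Rightarrow> nat \<Rightarrow> (nat \<Rightarrow> real)" where
  "coeffs f M t d 0 = (\<lambda>_. 0)"
| "coeffs f M t d (Suc n) =
     (coeffs f M t d n)(Suc n :=
        real t * (f (gridpt t d (Suc n))
                  - partial_net f M t d (coeffs f M t d n) (Suc n) (gridpt t d (Suc n))))"

definition fhat :: "((nat \<Rightarrow> real) \<Rightarrow> real) \<Rightarrow> real \<Rightarrow> nat \<Rightarrow> nat \<Rightarrow> (nat \<Rightarrow> real) \<Rightarrow> real" where
  "fhat f M t d x =
     (let k = (t+1)^d; a = coeffs f M t d (k - 1)
      in f (\<lambda>_. 0) + (\<Sum>i\<in>{1..k-1}. gunit M t d (a i) (gridpt t d i) x))"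

end

theory Submission
  imports Defs
begin

lemma repr:
  fixes B :: nat
  shows "i < B^d \<Longrightarrow> i = (\<Sum>r=1..d. ((i div B^(d-r)) mod B) * B^(d-r))"
proof (induction d arbitrary: i)
  case 0 then show ?case by simp
next
  case (Suc d)
  have B: "B > 0" using Suc.prems by (cases "B = 0") auto
  have lt: "i div B < B^d" using Suc.prems B
    by (simp add: div_less_iff_less_mult mult.commute)
  have "(\<Sum>r=1..Suc d. ((i div B^(Suc d-r)) mod B) * B^(Suc d-r))
     = (\<Sum>r=1..d. ((i div B^(Suc d-r)) mod B) * B^(Suc d-r)) + i mod B"
    by simp
  also have "(\<Sum>r=1..d. ((i div B^(Suc d-r)) mod B) * B^(Suc d-r))
     = B * (\<Sum>r=1..d. (((i div B) div B^(d-r)) mod B) * B^(d-r))"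
    unfolding sum_distrib_left
  proof (rule sum.cong)
    fix r assume "r \<in> {1..d}"
    then have e: "Suc d - r = Suc (d - r)" by auto
    show "i div B ^ (Suc d - r) mod B * B ^ (Suc d - r) = B * (i div B div B ^ (d - r) mod B * B ^ (d - r))"
      unfolding e by (simp add: div_mult2_eq)
  qed simp
  also have "\<dots> = B * (i div B)" using Suc.IH[OF lt] by simp
  finally show ?case by simp
qed

lemma digits_of:
  fixes B :: nat
  assumes "\<forall>r\<in>{1..d}. c r < B"
  shows "(\<Sum>r=1..d. c r * B^(d-r)) < B^d \<and>
         (\<forall>r\<in>{1..d}. ((\<Sum>r=1..d. c r * B^(d-r)) div B^(d-r)) mod B = c r)"
  using assms
proof (induction d)
  case 0 then show ?case by simp
next
  case (Suc d)
  define s where "s = (\<Sum>r=1..d. c r * B^(d-r))"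
  have IH: "s < B^d" "\<forall>r\<in>{1..d}. (s div B^(d-r)) mod B = c r"
    using Suc by (auto simp: s_def)
  have cS: "c (Suc d) < B" using Suc.prems by auto
  have "(\<Sum>r=1..Suc d. c r * B^(Suc d-r)) = (\<Sum>r=1..d. c r * B^(Suc d-r)) + c (Suc d)"
    by simp
  also have "(\<Sum>r=1..d. c r * B^(Suc d-r)) = B * s"
    unfolding s_def sum_distrib_left
    by (rule sum.cong) (auto simp: Suc_diff_le)
  finally have eq: "(\<Sum>r=1..Suc d. c r * B^(Suc d-r)) = B * s + c (Suc d)" .
  have dv: "(B * s + c (Suc d)) div B = s" "(B * s + c (Suc d)) mod B = c (Suc d)"
    using cS by auto
  have "B * s + c (Suc d) < B ^ Suc d"
  proof -
    have "s + 1 \<le> B^d" using IH by simp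
    then have "B * (s+1) \<le> B * B^d" by (rule mult_left_mono) simp
    then show ?thesis using cS by (simp add: algebra_simps)
  qed
  moreover have "\<forall>r\<in>{1..Suc d}. ((B * s + c (Suc d)) div B^(Suc d-r)) mod B = c r"
  proof
    fix r assume r: "r \<in> {1..Suc d}"
    show "((B * s + c (Suc d)) div B^(Suc d-r)) mod B = c r"
    proof (cases "r = Suc d")
      case True then show ?thesis using dv by simp
    next
      case False
      then have "r \<in> {1..d}" using r by auto
      then have e: "Suc d - r = Suc (d - r)" by auto
      have "(B * s + c (Suc d)) div B^(Suc d-r) = ((B * s + c (Suc d)) div B) div B^(d-r)"
        unfolding e by (simp add: div_mult2_eq)
      then show ?thesis using dv IH \<open>r \<in> {1..d}\<close> by simp
    qed
  qed
  ultimately show ?case using eq by simp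
qed

lemma coeffs_stable: "j \<le> m \<Longrightarrow> coeffs f M t d m j = coeffs f M t d j j"
proof (induction m)
  case 0 then show ?case by simp
next
  case (Suc m)
  show ?case
  proof (cases "j = Suc m")
    case True then show ?thesis by simp
  next
    case False then have "j \<le> m" using Suc.prems by simp
    then show ?thesis using Suc.IH False by simp
  qed
qed

lemma partial_cong:
  "(\<And>j. j < i \<Longrightarrow> a j = a' j) \<Longrightarrow> partial_net f M t d a i x = partial_net f M t d a' i x"
  unfolding partial_net_def by (intro arg_cong2[where f="(+)"] refl sum.cong) auto

lemma gunit_eval:
  assumes t: "t \<ge> 1" and M: "M \<ge> 1"
  shows "gunit M t d a (gridpt t d j) (gridpt t d i) =
    (if \<forall>r\<in>{1..d}. digit t d j r \<le> digit t d i r then a / real t else 0)"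
proof (cases "\<forall>r\<in>{1..d}. digit t d j r \<le> digit t d i r")
  case True
  have "(\<Sum>r=1..d. - M * relu (- gridpt t d i r + gridpt t d j r)) = 0"
  proof (rule sum.neutral, rule ballI)
    fix r assume r: "r \<in> {1..d}"
    have "real (digit t d j r) / real t \<le> real (digit t d i r) / real t"
      using True r by (simp add: divide_right_mono)
    then show "- M * relu (- gridpt t d i r + gridpt t d j r) = 0"
      using r by (simp add: gridpt_def relu_def)
  qed
  then show ?thesis using True t by (simp add: gunit_def relu_def)
next
  case False
  then obtain r0 where r0: "r0 \<in> {1..d}" "digit t d j r0 > digit t d i r0" by auto
  have tp: "real t > 0" using t by simp
  have "real (digit t d j r0) \<ge> real (digit t d i r0) + 1" using r0 by simp
  then have "real (digit t d j r0) / real t - real (digit t d i r0) / real t \<ge> 1 / real t"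
    using tp by (simp add: diff_divide_distrib[symmetric] divide_right_mono)
  then have h0: "- gridpt t d i r0 + gridpt t d j r0 \<ge> 1 / real t"
    using r0 by (simp add: gridpt_def)
  then have "relu (- gridpt t d i r0 + gridpt t d j r0) \<ge> 1 / real t"
    by (simp add: relu_def)
  moreover have "1 / real t \<ge> 0" using tp by simp
  ultimately have "M * relu (- gridpt t d i r0 + gridpt t d j r0) \<ge> 1 / real t"
    using M by (metis dual_order.trans mult_1 mult_mono zero_le_one)
  then have T0: "- M * relu (- gridpt t d i r0 + gridpt t d j r0) \<le> - (1 / real t)" by simp
  have nonpos: "\<And>r. - M * relu (- gridpt t d i r + gridpt t d j r) \<le> 0"
    using M by (simp add: relu_def)
  have "(\<Sum>r=1..d. - M * relu (- gridpt t d i r + gridpt t d j r))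
     = - M * relu (- gridpt t d i r0 + gridpt t d j r0)
       + (\<Sum>r\<in>{1..d}-{r0}. - M * relu (- gridpt t d i r + gridpt t d j r))"
    using r0(1) by (simp add: sum.remove)
  also have "\<dots> \<le> - (1 / real t) + 0"
    using T0 sum_nonpos[of "{1..d}-{r0}" "\<lambda>r. - M * relu (- gridpt t d i r + gridpt t d j r)"] nonpos
    by (meson add_mono)
  finally have "(\<Sum>r=1..d. - M * relu (- gridpt t d i r + gridpt t d j r)) + 1 / real t \<le> 0" by simp
  then have "relu ((\<Sum>r=1..d. - M * relu (- gridpt t d i r + gridpt t d j r)) + 1 / real t) = 0"
    by (simp add: relu_def)
  then have "gunit M t d a (gridpt t d j) (gridpt t d i) = 0"
    unfolding gunit_def by (simp only: mult_zero_right)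
  then show ?thesis using False by (simp only: if_False)
qed

lemma digits_le:
  assumes t: "t \<ge> 1" and j: "j < (t+1)^d" and i: "i < (t+1)^d"
    and le: "\<forall>r\<in>{1..d}. digit t d j r \<le> digit t d i r"
  shows "j \<le> i"
proof -
  have "j = (\<Sum>r=1..d. digit t d j r * (t+1)^(d-r))"
    using repr[OF j] by (simp add: digit_def)
  also have "\<dots> \<le> (\<Sum>r=1..d. digit t d i r * (t+1)^(d-r))"
    by (rule sum_mono) (use le in auto)
  also have "\<dots> = i" using repr[OF i] by (simp add: digit_def)
  finally show ?thesis .
qed

lemma fhat_grid:
  assumes t: "t \<ge> 1" and M: "M \<ge> 1" and i: "i < (t+1)^d"
  shows "fhat f M t d (gridpt t d i) = f (gridpt t d i)"
proof -
  define K where "K = (t+1)^d"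
  define a where "a = coeffs f M t d (K - 1)"
  have tp: "real t > 0" using t by simp
  let ?g = "\<lambda>j. gunit M t d (a j) (gridpt t d j) (gridpt t d i)"
  have zero: "?g j = 0" if "j \<in> {1..K-1}" "j \<notin> {1..i}" for j
  proof -
    have "j < K" "j > i" using that by auto
    then have "\<not> (\<forall>r\<in>{1..d}. digit t d j r \<le> digit t d i r)"
      using digits_le[OF t, of j d i] i K_def by auto
    then show ?thesis by (simp only: gunit_eval[OF t M] if_False)
  qed
  have sub: "{1..i} \<subseteq> {1..K-1}" using i K_def by auto
  have fh: "fhat f M t d (gridpt t d i) = f (\<lambda>_. 0) + (\<Sum>j\<in>{1..i}. ?g j)"
    unfolding fhat_def Let_def K_def[symmetric] a_def[symmetric]
  proof -
    have "(\<Sum>j\<in>{1..K-1}. ?g j) = (\<Sum>j\<in>{1..i}. ?g j)"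
    proof (rule sum.mono_neutral_right[OF _ sub])
      show "finite {1..K-1}" by simp
      show "\<forall>j\<in>{1..K-1} - {1..i}. ?g j = 0"
      proof
        fix j assume "j \<in> {1..K-1} - {1..i}"
        then show "?g j = 0" by (intro zero) auto
      qed
    qed
    then show "f (\<lambda>_. 0) + (\<Sum>j\<in>{1..K-1}. ?g j) = f (\<lambda>_. 0) + (\<Sum>j\<in>{1..i}. ?g j)"
      by simp
  qed
  show ?thesis
  proof (cases "i = 0")
    case True
    have "gridpt t d 0 = (\<lambda>_. 0)" by (auto simp: gridpt_def digit_def)
    then show ?thesis using fh True by simp
  next
    case False
    have split: "{1..i} = insert i {1..<i}" using False by auto
    have gi: "?g i = a i / real t" by (simp add: gunit_eval[OF t M])
    have ai: "a i = coeffs f M t d i i" unfolding a_def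
      by (rule coeffs_stable) (use i K_def in simp)
    obtain n where n: "i = Suc n" using False by (cases i) auto
    have cii: "coeffs f M t d i i = real t * (f (gridpt t d i)
        - partial_net f M t d (coeffs f M t d n) i (gridpt t d i))"
      using n by simp
    have pc: "partial_net f M t d (coeffs f M t d n) i (gridpt t d i)
        = partial_net f M t d a i (gridpt t d i)"
    proof (rule partial_cong)
      fix j assume "j < i"
      then have "j \<le> n" "j \<le> K - 1" using n i K_def by auto
      then show "coeffs f M t d n j = a j" unfolding a_def
        using coeffs_stable[of j n f M t d] coeffs_stable[of j "K-1" f M t d] by simp
    qed
    have "fhat f M t d (gridpt t d i) = partial_net f M t d a i (gridpt t d i) + a i / real t"
      using fh gi unfolding split partial_net_def by simp
    then show ?thesis using ai cii pc tp by simp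
  qed
qed

theorem lemmaA1:
  fixes d t :: nat and M :: real and f :: "(nat \<Rightarrow> real) \<Rightarrow> real" and p :: "nat \<Rightarrow> real"
  assumes "d \<ge> 1" and "t \<ge> 1" and "M \<ge> 1"
    and "p \<in> gridP t d"
  shows "\<bar>f p - fhat f M t d p\<bar> = 0"
proof -
  have "\<forall>r\<in>{1..d}. \<exists>i::nat. i \<le> t \<and> p r = real i / real t"
    and out: "\<forall>r. r \<notin> {1..d} \<longrightarrow> p r = 0"
    using assms(4) by (auto simp: gridP_def)
  then obtain c where c: "\<forall>r\<in>{1..d}. c r \<le> t \<and> p r = real (c r) / real t"
    by metis
  define i where "i = (\<Sum>r=1..d. c r * (t+1)^(d-r))"
  have D: "i < (t+1)^d \<and> (\<forall>r\<in>{1..d}. (i div (t+1)^(d-r)) mod (t+1) = c r)"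
    unfolding i_def by (rule digits_of) (use c in auto)
  have "gridpt t d i = p"
  proof
    fix r show "gridpt t d i r = p r"
      using D c out by (auto simp: gridpt_def digit_def)
  qed
  then show ?thesis using fhat_grid[OF assms(2,3), of i d f] D by simp
qed

end
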